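(* Let $T(n)=(3n+1)/2^{v_2(3n+1)}$ be the Syracuse map. For odd $n$ let $L(n)=v_2(n+1)-1$. Fix $\ell\ge 0$. Among the odd positive integers $n$ with $L(n)=\ell$, the natural density (relative to that set) of those with $T^{\ell+1}(n)<n$ equals $$p_\ell=2^{-\lfloor(\log_2 3-1)(\ell+1)\rfloor}.$$
   Context: $v_2$ is the $2$-adic valuation; $T^j$ the $j$-th iterate. *)

theory Defs
  imports Complex_Main "HOL-Computational_Algebra.Primes"
begin

definition v2 :: "nat \<Rightarrow> nat" where
  "v2 m = multiplicity (2::nat) m"

definition syracuse :: "nat \<Rightarrow> nat" where
  "syracuse n = (3 * n + 1) div 2 ^ v2 (3 * n + 1)"

text \<open>L(n) = v2(n+1) - 1 (used for odd n, where v2(n+1) \<ge> 1)\<close>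
definition Lval :: "nat \<Rightarrow> nat" where
  "Lval n = v2 (n + 1) - 1"

definition has_rel_density :: "(nat \<Rightarrow> bool) \<Rightarrow> (nat \<Rightarrow> bool) \<Rightarrow> real \<Rightarrow> bool" where
  "has_rel_density P S d \<longleftrightarrow>
     ((\<lambda>N. real (card {n \<in> {1..N}. S n \<and> P n}) / real (card {n \<in> {1..N}. S n}))
        \<longlongrightarrow> d) sequentially"

end

theory Submission
  imports Defs "HOL-Number_Theory.Number_Theory"
begin


lemma v2_double: "y > 0 \<Longrightarrow> v2 (2*y) = Suc (v2 y)"
  unfolding v2_def by (rule multiplicity_times_same) auto

lemma v2_odd: "odd y \<Longrightarrow> v2 y = 0"
  unfolding v2_def by (rule not_dvd_imp_multiplicity_0) auto

lemma syr_step: assumes "3*x+1 = 2*y" "y > 0" shows "syracuse x = y div 2^(v2 y)"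
proof -
  have "syracuse x = (2*y) div (2 * 2^(v2 y))"
    unfolding syracuse_def assms(1) using v2_double[OF assms(2)] by simp
  also have "\<dots> = y div 2^(v2 y)" by (rule div_mult_mult1) simp
  finally show ?thesis .
qed

lemma syr_iter:
  assumes "m \<ge> 1" "j \<le> l"
  shows "(syracuse^^j) (2^(l+1)*m - 1) + 1 = 3^j * 2^(l+1-j) * m"
  using assms(2)
proof (induction j)
  case 0
  have "2^(l+1)*m \<ge> (1::nat)" using assms(1) by (simp add: Suc_le_eq)
  then show ?case by simp
next
  case (Suc j)
  define x where "x = (syracuse^^j) (2^(l+1)*m - 1)"
  have hx: "x + 1 = 3^j * 2^(l+1-j) * m" using Suc by (simp add: x_def)
  define c where "c = 3^(Suc j) * 2^(l-j) * m"
  have e: "l+1-j = Suc (l-j)" using Suc.prems by simp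
  have "3*(x+1) = 2*c" unfolding hx c_def e by simp
  have ev: "even c" using Suc.prems unfolding c_def by (simp add: Suc_le_eq)
  have cpos: "c \<ge> 1" unfolding c_def using assms(1) by simp
  define y where "y = c - 1"
  have yc: "y + 1 = c" using cpos y_def by simp
  have "odd y" using ev yc by (metis even_plus_one_iff)
  hence "y > 0" by (cases y) auto
  have "3*x+1 = 2*y" using \<open>3*(x+1) = 2*c\<close> yc by simp
  hence "syracuse x = y" using syr_step[OF _ \<open>y>0\<close>] v2_odd[OF \<open>odd y\<close>] by simp
  hence "(syracuse^^Suc j) (2^(l+1)*m - 1) = y" by (simp add: x_def)
  moreover have "l + 1 - Suc j = l - j" by simp
  ultimately show ?case using yc c_def by simp
qed

lemma syr_final:
  assumes "m \<ge> 1"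
  shows "(syracuse^^(l+1)) (2^(l+1)*m - 1) = (3^(l+1)*m - 1) div 2^(v2 (3^(l+1)*m - 1))"
proof -
  define x where "x = (syracuse^^l) (2^(l+1)*m - 1)"
  have hx: "x + 1 = 3^l * 2 * m" using syr_iter[OF assms, of l l] by (simp add: x_def)
  define y where "y = 3^(l+1)*m - 1"
  have "3^l*m \<ge> (1::nat)" using assms by (simp add: Suc_le_eq)
  moreover have "3^(l+1)*m = 3*(3^l*m)" by simp
  ultimately have "3^(l+1)*m \<ge> (3::nat)" by linarith
  hence yc: "y + 1 = 3^(l+1)*m" "y > 0" unfolding y_def by linarith+
  have "3*x+1 = 2*y" using hx yc by simp
  then show ?thesis using syr_step[OF _ \<open>y>0\<close>] by (simp add: x_def y_def)
qed


lemma key_a: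
  fixes A B J m y p g :: nat
  assumes h1: "2^J * B < 2 * A" and m: "m \<ge> 1" and y: "y + 1 = A*m"
    and pg: "p * g = y" and p: "p \<ge> 1" and pJ: "2*p \<le> 2^J"
  shows "\<not> (g + 2 \<le> B*m)"
proof
  assume g: "g + 2 \<le> B*m"
  have "p*(g+2) \<le> p*(B*m)" using g by (rule mult_left_mono) simp
  hence "2*y + 4*p \<le> (2*p)*(B*m)" using pg by (simp add: algebra_simps)
  also have "\<dots> \<le> 2^J*(B*m)" using pJ by (rule mult_right_mono) simp
  also have "\<dots> = (2^J*B)*m" by simp
  also have "\<dots> < (2*A)*m" using h1 m by simp
  finally have "2*y + 4*p < 2*(A*m)" by simp
  thus False using y p by simp
qed

lemma key_b:
  fixes A B J m y p g :: nat
  assumes h2: "A < 2^J * B" and m: "m \<ge> 2^J" and y: "y + 1 = A*m"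
    and pg: "p * g = y" and pJ: "2^J \<le> p"
  shows "g + 1 < B*m"
proof (rule ccontr)
  assume "\<not> g + 1 < B*m"
  hence g: "B*m \<le> g + 1" by simp
  have "2^J*(B*m) \<le> 2^J*(g+1)" using g by (rule mult_left_mono) simp
  also have "\<dots> = 2^J*g + 2^J" by simp
  also have "2^J*g \<le> p*g" using pJ by (rule mult_right_mono) simp
  hence "2^J*g + 2^J \<le> y + 2^J" using pg by simp
  finally have 1: "2^J*(B*m) \<le> y + 2^J" .
  have "(A+1)*m \<le> (2^J*B)*m" using h2 by (intro mult_right_mono) simp_all
  hence "A*m + m \<le> 2^J*(B*m)" by (simp add: algebra_simps)
  with 1 y m show False by linarith
qed



lemma J_bounds:
  fixes l :: nat
  defines "F \<equiv> \<lfloor>(log 2 3 - 1) * real (l + 1)\<rfloor>"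
  shows "F \<ge> 0" "2^(nat F + 1 + l) < (3::nat)^(l+1)" "(3::nat)^(l+1) < 2^(nat F + 1 + l + 1)"
proof -
  have lg: "log 2 3 > (1::real)" by (simp add: less_log_iff)
  have lp: "log 2 (3^(l+1)) = real (l+1) * log 2 (3::real)" by (rule log_nat_power) simp
  have pw: "\<And>k. 2 powr real k = (2::real)^k" by (rule powr_realpow) simp
  show F0: "F \<ge> 0" unfolding F_def using lg by simp
  have "of_int F \<le> (log 2 3 - 1) * real (l + 1)" unfolding F_def by simp
  hence "real (nat F + 1 + l) \<le> log 2 (3^(l+1))" using F0 lp by (simp add: algebra_simps)
  hence "2 powr real (nat F + 1 + l) \<le> 3^(l+1)" by (subst (asm) le_log_iff) auto
  hence "real (2^(nat F + 1 + l)) \<le> real (3^(l+1))" unfolding pw by simp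
  hence le: "2^(nat F + 1 + l) \<le> (3::nat)^(l+1)" by linarith
  have "2^(nat F + 1 + l) \<noteq> (3::nat)^(l+1)"
  proof
    assume "2^(nat F + 1 + l) = (3::nat)^(l+1)"
    moreover have "even ((2::nat)^(nat F + 1 + l))" by simp
    moreover have "odd ((3::nat)^(l+1))" by simp
    ultimately show False by simp
  qed
  with le show "2^(nat F + 1 + l) < (3::nat)^(l+1)" by simp
  have "(log 2 3 - 1) * real (l + 1) < of_int F + 1" unfolding F_def by linarith
  hence "log 2 (3^(l+1)) < real (nat F + 1 + l + 1)" using F0 lp by (simp add: algebra_simps)
  hence "3^(l+1) < 2 powr real (nat F + 1 + l + 1)" by (subst (asm) log_less_iff) auto
  hence "real (3^(l+1)) < real (2^(nat F + 1 + l + 1))" unfolding pw by simp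
  thus "(3::nat)^(l+1) < 2^(nat F + 1 + l + 1)" by linarith
qed



lemma periodic_shift:
  assumes "\<forall>m. Q (m + p) = Q m" shows "Q (m + q*p) = Q (m::nat)"
proof (induction q)
  case (Suc q)
  have "m + Suc q * p = (m + q*p) + p" by simp
  then show ?case using assms Suc by metis
qed simp

lemma periodic_count:
  assumes per: "\<forall>m. Q (m + p) = Q (m::nat)"
  shows "card {m. m < q*p \<and> Q m} = q * card {m. m < p \<and> Q m}"
proof (induction q)
  case 0 then show ?case by simp
next
  case (Suc q)
  have eq: "{m. m < Suc q * p \<and> Q m} = {m. m < q*p \<and> Q m} \<union> (\<lambda>m. m + q*p) ` {m. m < p \<and> Q m}"
  proof (rule equalityI; rule subsetI)
    fix x assume x: "x \<in> {m. m < Suc q * p \<and> Q m}"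
    show "x \<in> {m. m < q*p \<and> Q m} \<union> (\<lambda>m. m + q*p) ` {m. m < p \<and> Q m}"
    proof (cases "x < q*p")
      case True then show ?thesis using x by simp
    next
      case False
      then have "x = (x - q*p) + q*p" by simp
      moreover have "x - q*p < p"
      proof -
        have "Suc q * p = p + q*p" by simp
        moreover have "x < Suc q * p" using x by simp
        ultimately show ?thesis using False by linarith
      qed
      moreover have "Q (x - q*p)" using x periodic_shift[OF per, of "x - q*p" q] False by simp
      ultimately show ?thesis by blast
    qed
  next
    fix x assume "x \<in> {m. m < q*p \<and> Q m} \<union> (\<lambda>m. m + q*p) ` {m. m < p \<and> Q m}"
    then show "x \<in> {m. m < Suc q * p \<and> Q m}"
      using periodic_shift[OF per] by auto
  qed
  have "card ({m. m < q*p \<and> Q m} \<union> (\<lambda>m. m + q*p) ` {m. m < p \<and> Q m})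
        = card {m. m < q*p \<and> Q m} + card ((\<lambda>m. m + q*p) ` {m. m < p \<and> Q m})"
    by (rule card_Un_disjoint) auto
  also have "card ((\<lambda>m. m + q*p) ` {m. m < p \<and> Q m}) = card {m. m < p \<and> Q m}"
    by (rule card_image) (auto simp: inj_on_def)
  finally show ?case using eq Suc.IH by simp
qed

lemma periodic_bound:
  assumes per: "\<forall>m. Q (m + p) = Q (m::nat)" and p: "p > 0"
  shows "\<bar>real (card {m. m < M \<and> Q m}) - real (card {m. m < p \<and> Q m}) * real M / real p\<bar>
          \<le> real (card {m. m < p \<and> Q m})"
proof -
  define k where "k = card {m. m < p \<and> Q m}"
  define q where "q = M div p"
  have q1: "q*p \<le> M" unfolding q_def using div_mult_mod_eq[of M p] by linarith
  have q2: "M < Suc q * p" unfolding q_def using p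
    by (metis add.commute mod_less_divisor mult.commute mult_Suc nat_add_left_cancel_less div_mult_mod_eq)
  have "card {m. m < q*p \<and> Q m} \<le> card {m. m < M \<and> Q m}"
    by (rule card_mono) (use q1 in auto)
  hence c1: "q*k \<le> card {m. m < M \<and> Q m}" using periodic_count[OF per, of q] k_def by simp
  have "card {m. m < M \<and> Q m} \<le> card {m. m < Suc q * p \<and> Q m}"
    by (rule card_mono) (use q2 in auto)
  hence c2: "card {m. m < M \<and> Q m} \<le> Suc q * k" using periodic_count[OF per, of "Suc q"] k_def by simp
  have r1: "real q * real p \<le> real M" using q1 by (metis of_nat_le_iff of_nat_mult)
  have r2: "real M < (real q + 1) * real p" using q2 by (metis of_nat_less_iff of_nat_mult of_nat_Suc add.commute)
  have "real q \<le> real M / real p" using r1 p by (simp add: field_simps)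
  moreover have "real M / real p < real q + 1" using r2 p by (simp add: field_simps)
  ultimately have a: "real k * real q \<le> real k * (real M / real p)" "real k * (real M / real p) \<le> real k * (real q + 1)"
    by (metis mult_left_mono of_nat_0_le_iff, metis less_imp_le mult_left_mono of_nat_0_le_iff)
  have b1: "real q * real k \<le> real (card {m. m < M \<and> Q m})" using c1 by (metis of_nat_le_iff of_nat_mult)
  have b2: "real (card {m. m < M \<and> Q m}) \<le> (real q + 1) * real k" using c2 by (metis of_nat_le_iff of_nat_mult of_nat_Suc add.commute)
  show ?thesis unfolding k_def[symmetric] using a b1 b2 by (simp add: algebra_simps abs_le_iff)
qed

lemma ratio_lim:
  fixes c :: "nat \<Rightarrow> real"
  assumes "\<And>M. \<bar>c M - a * real M\<bar> \<le> C"
  shows "(\<lambda>M. c M / real M) \<longlonglongrightarrow> a"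
proof (rule tendsto_sandwich[of "\<lambda>M. a - C / real M" _ _ "\<lambda>M. a + C / real M"])
  show "\<forall>\<^sub>F M in sequentially. a - C / real M \<le> c M / real M"
  proof (rule eventually_sequentiallyI[of 1])
    fix M :: nat assume "1 \<le> M"
    hence M: "real M > 0" by simp
    have "a * real M - C \<le> c M" using assms[of M] by (simp add: abs_le_iff)
    hence "(a * real M - C) / real M \<le> c M / real M" using M by (intro divide_right_mono) auto
    moreover have "(a * real M - C) / real M = a - C / real M" using M by (simp add: field_simps)
    ultimately show "a - C / real M \<le> c M / real M" by simp
  qed
  show "\<forall>\<^sub>F M in sequentially. c M / real M \<le> a + C / real M"
  proof (rule eventually_sequentiallyI[of 1])
    fix M :: nat assume "1 \<le> M"
    hence M: "real M > 0" by simp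
    have "c M \<le> a * real M + C" using assms[of M] by (simp add: abs_le_iff)
    hence "c M / real M \<le> (a * real M + C) / real M" using M by (intro divide_right_mono) auto
    moreover have "(a * real M + C) / real M = a + C / real M" using M by (simp add: field_simps)
    ultimately show "c M / real M \<le> a + C / real M" by simp
  qed
  have "(\<lambda>M. C / real M) \<longlonglongrightarrow> 0" by (rule tendsto_divide_0[OF tendsto_const]) (rule filterlim_at_top_imp_at_infinity[OF filterlim_real_sequentially])
  from tendsto_diff[OF tendsto_const[of a] this] show "(\<lambda>M. a - C / real M) \<longlonglongrightarrow> a" by simp
  from tendsto_add[OF tendsto_const[of a] \<open>(\<lambda>M. C / real M) \<longlonglongrightarrow> 0\<close>] show "(\<lambda>M. a + C / real M) \<longlonglongrightarrow> a" by simp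
qed



lemma Schar:
  fixes n l :: nat
  shows "(odd n \<and> 0 < n \<and> Lval n = l) \<longleftrightarrow> (\<exists>m. odd m \<and> n + 1 = 2^(l+1)*m)"
proof
  assume h: "odd n \<and> 0 < n \<and> Lval n = l"
  obtain y where y: "n + 1 = 2 ^ multiplicity 2 (n+1) * y" "\<not> 2 dvd y"
    using multiplicity_decompose'[of "n+1" "2::nat"] by auto
  have "multiplicity 2 (n+1) \<noteq> 0"
  proof
    assume "multiplicity 2 (n+1) = 0"
    then have "n + 1 = y" using y by simp
    then have "odd (n+1)" using y(2) by simp
    then show False using h by simp
  qed
  then have "multiplicity 2 (n+1) = l + 1" using h unfolding Lval_def v2_def by auto
  then show "\<exists>m. odd m \<and> n + 1 = 2^(l+1)*m" using y by auto
next
  assume "\<exists>m. odd m \<and> n + 1 = 2^(l+1)*m"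
  then obtain m where m: "odd m" "n + 1 = 2^(l+1)*m" by blast
  have "multiplicity 2 (n+1) = l + 1" by (rule multiplicity_decomposeI[OF m(2)]) (use m in auto)
  moreover have "even (n+1)" using m(2) by simp
  hence "odd n" by simp
  moreover note this
  moreover have "m \<ge> 1" using m by (cases m) auto
  hence "2^(l+1)*m \<ge> (2::nat)" by (metis mult_le_mono one_le_numeral one_le_power power_add power_one_right mult.right_neutral mult_le_mono1 le_trans self_le_power order_refl zero_less_Suc Suc_eq_plus1 Suc_le_eq power_increasing le_add2)
  hence "n > 0" using m(2) by linarith
  ultimately show "odd n \<and> 0 < n \<and> Lval n = l" unfolding Lval_def v2_def by simp
qed

lemma transfer:
  fixes l N :: nat and R :: "nat \<Rightarrow> bool"
  defines "B \<equiv> (2::nat)^(l+1)"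
  shows "card {n \<in> {1..N}. (odd n \<and> 0 < n \<and> Lval n = l) \<and> R n}
       = card {m. m < (N+1) div B + 1 \<and> odd m \<and> R (B*m - 1)}"
proof -
  have B2: "B \<ge> 2" unfolding B_def by (metis one_le_numeral power_increasing le_add2 power_one_right)
  have eq: "{n \<in> {1..N}. (odd n \<and> 0 < n \<and> Lval n = l) \<and> R n}
      = (\<lambda>m. B*m - 1) ` {m. m < (N+1) div B + 1 \<and> odd m \<and> R (B*m - 1)}"
  proof (rule equalityI; rule subsetI)
    fix n assume n: "n \<in> {n \<in> {1..N}. (odd n \<and> 0 < n \<and> Lval n = l) \<and> R n}"
    then obtain m where m: "odd m" "n + 1 = B*m" using Schar unfolding B_def by blast
    have "B*m \<le> N+1" using n m by simp
    hence "(B*m) div B \<le> (N+1) div B" by (rule div_le_mono)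
    hence "m \<le> (N+1) div B" using B2 by simp
    moreover have "n = B*m - 1" using m by simp
    ultimately show "n \<in> (\<lambda>m. B*m - 1) ` {m. m < (N+1) div B + 1 \<and> odd m \<and> R (B*m - 1)}"
      using n m by auto
  next
    fix n assume "n \<in> (\<lambda>m. B*m - 1) ` {m. m < (N+1) div B + 1 \<and> odd m \<and> R (B*m - 1)}"
    then obtain m where m: "n = B*m - 1" "m \<le> (N+1) div B" "odd m" "R (B*m - 1)" by auto
    have m1: "m \<ge> 1" using m by (cases m) auto
    have "B*m \<ge> 2" using B2 m1 by (metis mult_le_mono mult.right_neutral)
    hence n1: "n + 1 = B*m" using m by simp
    have "B*m \<le> B*((N+1) div B)" using m by simp
    also have "\<dots> \<le> N + 1" by simp
    finally have "n \<le> N" using n1 by simp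
    moreover have "odd n \<and> 0 < n \<and> Lval n = l" using Schar[of n l] n1 m unfolding B_def by blast
    ultimately show "n \<in> {n \<in> {1..N}. (odd n \<and> 0 < n \<and> Lval n = l) \<and> R n}" using m by auto
  qed
  have inj: "inj_on (\<lambda>m. B*m - 1) {m. m < (N+1) div B + 1 \<and> odd m \<and> R (B*m - 1)}"
  proof (rule inj_onI)
    fix x y assume x: "x \<in> {m. m < (N+1) div B + 1 \<and> odd m \<and> R (B*m - 1)}"
      and y: "y \<in> {m. m < (N+1) div B + 1 \<and> odd m \<and> R (B*m - 1)}" and e: "B*x - 1 = B*y - 1"
    have "x \<ge> 1" "y \<ge> 1" using x y by (cases x; auto; cases y; auto)+
    hence "B*x \<ge> 1" "B*y \<ge> 1" using B2 by (metis mult_le_mono mult.right_neutral le_trans one_le_numeral)+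
    hence "B*x = B*y" using e by linarith
    thus "x = y" using B2 by simp
  qed
  show ?thesis unfolding eq by (rule card_image[OF inj])
qed



lemma PQ:
  fixes l m :: nat
  defines "J \<equiv> nat \<lfloor>(log 2 3 - 1) * real (l + 1)\<rfloor> + 1"
  assumes m: "odd m" "2^J \<le> m"
  shows "(syracuse^^(l+1)) (2^(l+1)*m - 1) < 2^(l+1)*m - 1 \<longleftrightarrow> [3^(l+1)*m = 1] (mod 2^J)"
proof -
  define A where "A = (3::nat)^(l+1)"
  define B where "B = (2::nat)^(l+1)"
  define y where "y = A*m - 1"
  define p where "p = (2::nat)^(v2 y)"
  define g where "g = y div p"
  have m1: "m \<ge> 1" using m by (cases m) auto
  have jb: "2^(J+l) < A" "A < 2^(J+l+1)" using J_bounds[of l] unfolding J_def A_def by simp_all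
  have "(1::nat) \<le> 2^(J+l)" by simp
  hence A2: "A \<ge> 2" using jb by linarith
  have "A*m \<ge> 2*1" using A2 m1 by (rule mult_le_mono)
  hence y1: "y + 1 = A*m" "y > 0" unfolding y_def by linarith+
  have pg: "p * g = y" unfolding p_def g_def v2_def using multiplicity_dvd[of "2::nat" y] by simp
  have p1: "p \<ge> 1" unfolding p_def by simp
  have B2: "B = 2*2^l" unfolding B_def by simp
  have "B*m \<ge> 2*1" using B2 m1 by (intro mult_le_mono) auto
  hence Pg: "(syracuse^^(l+1)) (2^(l+1)*m - 1) < 2^(l+1)*m - 1 \<longleftrightarrow> g + 1 < B*m"
    using syr_final[OF m1, of l] unfolding g_def p_def y_def A_def B_def by linarith
  have "[A*m = 1] (mod 2^J) \<longleftrightarrow> 2^J dvd y" unfolding y_def using y1 A2 m1 by (subst cong_altdef_nat) auto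
  also have "\<dots> \<longleftrightarrow> J \<le> v2 y" unfolding v2_def using y1 by (subst power_dvd_iff_le_multiplicity) auto
  finally have Qv: "[A*m = 1] (mod 2^J) \<longleftrightarrow> J \<le> v2 y" .
  show ?thesis
  proof (cases "J \<le> v2 y")
    case True
    have "2^J \<le> p" unfolding p_def using True by (simp add: power_increasing)
    moreover have "A < 2^J * B" using jb unfolding B_def by (simp add: power_add)
    ultimately have "g + 1 < B*m" using key_b[OF _ m(2) y1(1) pg] by blast
    then show ?thesis using Pg Qv True A_def by simp
  next
    case False
    have "2*p \<le> 2^J" unfolding p_def using False
      by (metis Suc_leI not_le power_Suc power_increasing one_le_numeral)
    moreover have "2^J * B < 2 * A" using jb B2 by (simp add: power_add mult.assoc mult.left_commute)
    ultimately have "\<not> (g + 2 \<le> B*m)" using key_a[OF _ m1 y1(1) pg p1] by blast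
    then show ?thesis using Pg Qv False A_def by simp
  qed
qed

lemma Q_odd:
  assumes "J \<ge> 1" "[(3::nat)^(l+1)*m = 1] (mod 2^J)" shows "odd m"
proof -
  have "(2::nat) dvd 2^J" using assms(1) by (simp add: dvd_power)
  hence "[(3::nat)^(l+1)*m = 1] (mod 2)" using assms(2) by (rule cong_dvd_modulus_nat[rotated])
  hence "((3::nat)^(l+1)*m) mod 2 = 1" by (simp add: cong_def)
  hence "odd ((3::nat)^(l+1)*m)" by (simp only: odd_iff_mod_2_eq_one)
  thus ?thesis by simp
qed

lemma Q_card:
  assumes "J \<ge> 1"
  shows "card {m. m < 2^J \<and> [(3::nat)^(l+1)*m = 1] (mod 2^J)} = 1"
proof -
  have cop: "coprime ((3::nat)^(l+1)) (2^J)" by simp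
  obtain x where x: "x < 2^J" "[(3::nat)^(l+1)*x = Suc 0] (mod 2^J)"
    using coprime_iff_invertible'_nat[of "2^J" "3^(l+1)"] cop by auto
  have "{m. m < 2^J \<and> [(3::nat)^(l+1)*m = 1] (mod 2^J)} = {x}"
  proof (rule equalityI; rule subsetI)
    fix z assume "z \<in> {m. m < 2^J \<and> [(3::nat)^(l+1)*m = 1] (mod 2^J)}"
    hence z: "z < 2^J" "[(3::nat)^(l+1)*z = 1] (mod 2^J)" by auto
    have "[(3::nat)^(l+1)*z = 3^(l+1)*x] (mod 2^J)" using z(2) x(2) by (metis One_nat_def cong_sym cong_trans)
    hence "[z = x] (mod 2^J)" using cong_mult_lcancel_nat[OF cop] by simp
    thus "z \<in> {x}" using cong_less_modulus_unique_nat z(1) x(1) by simp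
  qed (use x in simp)
  thus ?thesis by simp
qed

lemma Q_per: "\<forall>m. [(3::nat)^(l+1)*(m + 2^J) = 1] (mod 2^J) = [(3::nat)^(l+1)*m = 1] (mod 2^J)"
  by (simp only: cong_def distrib_left mod_mult_self1 simp_thms)



theorem mainTheorem12:
  fixes l :: nat
  shows "has_rel_density (\<lambda>n. (syracuse ^^ (l + 1)) n < n)
           (\<lambda>n. odd n \<and> 0 < n \<and> Lval n = l)
           (2 powr (- real_of_int \<lfloor>(log 2 3 - 1) * real (l + 1)\<rfloor>))"
proof -
  define F where "F = \<lfloor>(log 2 3 - 1) * real (l + 1)\<rfloor>"
  define J where "J = nat F + 1"
  define B where "B = (2::nat)^(l+1)"
  define P' where "P' = (\<lambda>m. (syracuse^^(l+1)) (B*m - 1) < B*m - 1)"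
  define Q where "Q = (\<lambda>m. [(3::nat)^(l+1)*m = 1] (mod 2^J))"
  define cP where "cP = (\<lambda>M::nat. card {m::nat. m < M \<and> odd m \<and> P' m})"
  define cO where "cO = (\<lambda>M::nat. card {m::nat. m < M \<and> odd m})"
  define cQ where "cQ = (\<lambda>M::nat. card {m::nat. m < M \<and> Q m})"
  define Mf where "Mf = (\<lambda>N::nat. (N+1) div B + 1)"
  have F0: "F \<ge> 0" using J_bounds(1)[of l] F_def by simp
  have J1: "J \<ge> 1" unfolding J_def by simp
  have B1: "B \<ge> 1" unfolding B_def by simp
  have per2: "\<forall>m. odd (m + 2) = odd (m::nat)" by simp
  have c2: "card {m::nat. m < 2 \<and> odd m} = 1"
  proof -
    have "{m::nat. m < 2 \<and> odd m} = {1}" by (auto simp: less_2_cases_iff)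
    thus ?thesis by simp
  qed
  have bO: "\<And>M::nat. \<bar>real (cO M) - (1/2) * real M\<bar> \<le> 1"
    using periodic_bound[OF per2, of M for M] c2 unfolding cO_def by simp
  have bQ: "\<And>M::nat. \<bar>real (cQ M) - (1/2^J) * real M\<bar> \<le> 1"
  proof -
    fix M
    have "\<bar>real (cQ M) - real (card {m. m < 2^J \<and> Q m}) * real M / real ((2::nat)^J)\<bar>
          \<le> real (card {m. m < 2^J \<and> Q m})"
      unfolding cQ_def by (rule periodic_bound) (use Q_per[of l J] in \<open>simp_all add: Q_def\<close>)
    moreover have "card {m. m < 2^J \<and> Q m} = 1" unfolding Q_def by (rule Q_card[OF J1])
    ultimately show "\<bar>real (cQ M) - (1/2^J) * real M\<bar> \<le> 1" by simp
  qed
  have PQ': "\<And>m. odd m \<Longrightarrow> 2^J \<le> m \<Longrightarrow> P' m \<longleftrightarrow> Q m"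
    unfolding P'_def Q_def B_def J_def F_def by (rule PQ)
  have dPQ: "\<And>M::nat. \<bar>real (cP M) - real (cQ M)\<bar> \<le> 2^J"
  proof -
    fix M
    have "{m. m < M \<and> odd m \<and> P' m} \<subseteq> {..<2^J} \<union> {m. m < M \<and> Q m}"
      using PQ' by (auto simp: not_less)
    hence "cP M \<le> card ({..<2^J} \<union> {m. m < M \<and> Q m})" unfolding cP_def by (rule card_mono[rotated]) simp
    also have "\<dots> \<le> 2^J + cQ M" unfolding cQ_def using card_Un_le[of "{..<(2::nat)^J}"] by simp
    finally have 1: "cP M \<le> 2^J + cQ M" .
    have "{m. m < M \<and> Q m} \<subseteq> {..<2^J} \<union> {m. m < M \<and> odd m \<and> P' m}"
      using PQ' Q_odd[OF J1] unfolding Q_def by (auto simp: not_less)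
    hence "cQ M \<le> card ({..<2^J} \<union> {m. m < M \<and> odd m \<and> P' m})" unfolding cQ_def by (rule card_mono[rotated]) simp
    also have "\<dots> \<le> 2^J + cP M" unfolding cP_def using card_Un_le[of "{..<(2::nat)^J}"] by simp
    finally have 2: "cQ M \<le> 2^J + cP M" .
    have "real (cP M) \<le> 2^J + real (cQ M)" using 1 by (metis of_nat_add of_nat_le_iff of_nat_numeral of_nat_power)
    moreover have "real (cQ M) \<le> 2^J + real (cP M)" using 2 by (metis of_nat_add of_nat_le_iff of_nat_numeral of_nat_power)
    ultimately show "\<bar>real (cP M) - real (cQ M)\<bar> \<le> 2^J" by (simp add: abs_le_iff)
  qed
  have bP: "\<And>M::nat. \<bar>real (cP M) - (1/2^J) * real M\<bar> \<le> 2^J + 1"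
  proof -
    fix M show "\<bar>real (cP M) - (1/2^J) * real M\<bar> \<le> 2^J + 1"
      using dPQ[of M] bQ[of M] by (simp add: abs_le_iff)
  qed
  have limP: "(\<lambda>M. real (cP M) / real M) \<longlonglongrightarrow> 1/2^J" by (rule ratio_lim[OF bP])
  have limO: "(\<lambda>M. real (cO M) / real M) \<longlonglongrightarrow> 1/2" by (rule ratio_lim[OF bO])
  have "(\<lambda>M. (real (cP M) / real M) / (real (cO M) / real M)) \<longlonglongrightarrow> (1/2^J) / (1/2)"
    by (rule tendsto_divide[OF limP limO]) simp
  moreover have "\<forall>\<^sub>F M in sequentially. (real (cP M) / real M) / (real (cO M) / real M) = real (cP M) / real (cO M)"
  proof (rule eventually_sequentiallyI[of 1])
    fix M :: nat assume "1 \<le> M"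
    thus "(real (cP M) / real M) / (real (cO M) / real M) = real (cP M) / real (cO M)"
      by (cases "cO M = 0") (simp_all add: field_simps)
  qed
  ultimately have "(\<lambda>M. real (cP M) / real (cO M)) \<longlonglongrightarrow> (1/2^J) / (1/2)"
    by (rule Lim_transform_eventually)
  moreover have "(1/2^J) / (1/2) = (2::real) / 2^J" by simp
  ultimately have limR: "(\<lambda>M. real (cP M) / real (cO M)) \<longlonglongrightarrow> 2 / 2^J" by simp
  have Mlim: "filterlim Mf sequentially sequentially"
    unfolding filterlim_at_top
  proof (intro allI)
    fix Z
    show "\<forall>\<^sub>F N in sequentially. Z \<le> Mf N"
    proof (rule eventually_sequentiallyI[of "Z*B"])
      fix N assume "Z*B \<le> N"
      hence "(Z*B) div B \<le> (N+1) div B" by (intro div_le_mono) simp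
      thus "Z \<le> Mf N" unfolding Mf_def using B1 by simp
    qed
  qed
  have lim: "(\<lambda>N. real (cP (Mf N)) / real (cO (Mf N))) \<longlonglongrightarrow> 2 / 2^J"
    using filterlim_compose[OF limR Mlim] by (simp add: o_def)
  have tP: "\<And>N. card {n \<in> {1..N}. (odd n \<and> 0 < n \<and> Lval n = l) \<and> (syracuse ^^ (l + 1)) n < n} = cP (Mf N)"
    unfolding cP_def Mf_def P'_def B_def by (rule transfer)
  have tO: "\<And>N. card {n \<in> {1..N}. odd n \<and> 0 < n \<and> Lval n = l} = cO (Mf N)"
    using transfer[of _ l "\<lambda>_. True"] unfolding cO_def Mf_def B_def by simp
  have val: "2 powr (- real_of_int F) = 2 / 2^J"
  proof -
    have "2 powr (- real_of_int F) = 1 / 2 powr (real (nat F))" using F0 by (simp add: powr_minus divide_inverse)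
    also have "2 powr (real (nat F)) = (2::real)^(nat F)" by (rule powr_realpow) simp
    finally show ?thesis unfolding J_def by simp
  qed
  show ?thesis unfolding has_rel_density_def F_def[symmetric] val tP tO using lim by simp
qed


end
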